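(* Let $\mathbf{u},\mathbf{v}\in\mathbb{R}^2$ be fixed linearly independent unit vectors, and let $D_1\subset\mathbb{R}^2$ be an open disc of radius $r_1$ centered at the origin. Let $\mathbf{f}=(f_1,f_2)$ be a vector field on $\mathbb{R}^2$ with $f_1,f_2\in C^2_c(D_1)$. Then the transverse V-line transform satisfies $\mathcal{T}\mathbf{f}\equiv 0$ on $\mathbb{R}^2$ if and only if $\operatorname{div}\mathbf{f}=\frac{\partial f_1}{\partial x_1}+\frac{\partial f_2}{\partial x_2}=0$.
   Context: For a function $h$ on $\mathbb{R}^2$ and a unit vector $\mathbf{u}$, the divergent beam transform is $\mathcal{X}_{\mathbf{u}}h(\mathbf{x})=\int_0^\infty h(\mathbf{x}+t\mathbf{u})\,dt$. For $\mathbf{x}=(x_1,x_2)$ set $\mathbf{x}^\perp=(-x_2,x_1)$. The transverse V-line transform of $\mathbf{f}$ (with respect to the fixed directions $\mathbf{u},\mathbf{v}$) is the function on $\mathbb{R}^2$ given by $\mathcal{T}\mathbf{f}=-\mathcal{X}_{\mathbf{u}}(\mathbf{f}\cdot\mathbf{u}^\perp)+\mathcal{X}_{\mathbf{v}}(\mathbf{f}\cdot\mathbf{v}^\perp)$, where $\cdot$ is the Euclidean dot product. *)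

theory Defs
  imports "HOL-Analysis.Analysis"
begin

definition perp :: "real^2 \<Rightarrow> real^2" where
  "perp x = vector [- (x$2), x$1]"

definition beam :: "real^2 \<Rightarrow> (real^2 \<Rightarrow> real) \<Rightarrow> real^2 \<Rightarrow> real" where
  "beam u h x = integral {0..} (\<lambda>t::real. h (x + t *\<^sub>R u))"

definition TV :: "real^2 \<Rightarrow> real^2 \<Rightarrow> (real^2 \<Rightarrow> real^2) \<Rightarrow> real^2 \<Rightarrow> real" where
  "TV u v f x = - beam u (\<lambda>y. f y \<bullet> perp u) x + beam v (\<lambda>y. f y \<bullet> perp v) x"

definition partial :: "2 \<Rightarrow> (real^2 \<Rightarrow> real) \<Rightarrow> real^2 \<Rightarrow> real" where
  "partial i g x = frechet_derivative g (at x) (axis i 1)"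

definition divergence :: "(real^2 \<Rightarrow> real^2) \<Rightarrow> real^2 \<Rightarrow> real" where
  "divergence f x = partial 1 (\<lambda>y. f y $ 1) x + partial 2 (\<lambda>y. f y $ 2) x"

definition C1_plane :: "(real^2 \<Rightarrow> real) \<Rightarrow> bool" where
  "C1_plane g \<longleftrightarrow> (\<forall>x. g differentiable (at x)) \<and>
     (\<forall>i. continuous_on UNIV (partial i g))"

definition C2_plane :: "(real^2 \<Rightarrow> real) \<Rightarrow> bool" where
  "C2_plane g \<longleftrightarrow> C1_plane g \<and> (\<forall>i. C1_plane (partial i g))"

definition supp :: "(real^2 \<Rightarrow> real) \<Rightarrow> (real^2) set" where
  "supp g = closure {x. g x \<noteq> 0}"

definition C2c :: "(real^2) set \<Rightarrow> (real^2 \<Rightarrow> real) \<Rightarrow> bool" where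
  "C2c D g \<longleftrightarrow> C2_plane g \<and> compact (supp g) \<and> supp g \<subseteq> D"

end

theory Submission
  imports Defs
begin


lemma norm_ray_ge: fixes x w :: "real^2" assumes "norm w = 1"
  shows "norm (x + c *\<^sub>R w) \<ge> \<bar>c\<bar> - norm x"
proof -
  have "norm (c *\<^sub>R w) \<le> norm (x + c *\<^sub>R w) + norm x"
    by (metis add_diff_cancel_left' norm_diff_triangle_ineq norm_minus_commute add.commute norm_triangle_ineq4 order_trans)
  thus ?thesis using assms by simp
qed

lemma beam_trunc:
  fixes w y :: "real^2"
  assumes cont: "continuous_on UNIV \<phi>" and R: "R \<ge> 0"
    and z: "\<And>t. t \<ge> R \<Longrightarrow> \<phi> (y + t *\<^sub>R w) = 0"
  shows "beam w \<phi> y = integral {0..R} (\<lambda>t. \<phi> (y + t *\<^sub>R w))"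
proof -
  let ?F = "\<lambda>t. \<phi> (y + t *\<^sub>R w)"
  have c: "continuous_on {0..R} ?F"
    by (intro continuous_on_compose2[OF cont] continuous_intros) auto
  have i1: "(?F has_integral integral {0..R} ?F) {0..R}"
    using integrable_continuous_interval[OF c] by (simp add: has_integral_integral)
  have i2: "(?F has_integral 0) {R..}"
    by (rule has_integral_is_0) (use z in auto)
  have "(?F has_integral (integral {0..R} ?F + 0)) ({0..R} \<union> {R..})"
    by (rule has_integral_Un[OF i1 i2]) (rule negligible_subset[of "{R}"], auto)
  moreover have "{0..R} \<union> {R..} = {0..}" using R by auto
  ultimately show ?thesis unfolding beam_def by (simp add: integral_unique)
qed

lemma beam_dir_deriv:
  fixes w x :: "real^2"
  assumes cont: "continuous_on UNIV \<phi>" and w: "norm w = 1" and r: "r > 0"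
    and z: "\<And>y. norm y \<ge> r \<Longrightarrow> \<phi> y = 0"
  shows "((\<lambda>s. beam w \<phi> (x + s *\<^sub>R w)) has_real_derivative - \<phi> x) (at 0)"
proof -
  define M where "M = norm x + r + 1"
  let ?F = "\<lambda>t. \<phi> (x + t *\<^sub>R w)"
  have cF: "continuous_on S ?F" for S
    by (intro continuous_on_compose2[OF cont] continuous_intros) auto
  have eq: "beam w \<phi> (x + s *\<^sub>R w) = integral {-1..M} ?F - integral {-1..s} ?F"
    if s: "s \<in> {-1<..<1}" for s
  proof -
    have "beam w \<phi> (x + s *\<^sub>R w) = integral {0..M-s} (\<lambda>t. \<phi> (x + s *\<^sub>R w + t *\<^sub>R w))"
    proof (rule beam_trunc[OF cont])
      show "0 \<le> M - s" using s r norm_ge_zero[of x] unfolding M_def greaterThanLessThan_iff by linarith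
      fix t assume t: "M - s \<le> t"
      have "norm (x + (s + t) *\<^sub>R w) \<ge> \<bar>s + t\<bar> - norm x" by (rule norm_ray_ge[OF w])
      moreover have "\<bar>s + t\<bar> - norm x \<ge> r" using t unfolding M_def by auto
      ultimately show "\<phi> (x + s *\<^sub>R w + t *\<^sub>R w) = 0"
        using z by (simp add: scaleR_add_left add.assoc)
    qed
    also have "\<dots> = integral {0..M-s} (?F \<circ> (+) s)"
      by (simp add: o_def scaleR_add_left add.assoc)
    also have "\<dots> = integral {s..M} ?F"
      by (simp add: integral_shift_Icc_real)
    also have "\<dots> = integral {-1..M} ?F - integral {-1..s} ?F"
    proof -
      have "integral {-1..s} ?F + integral {s..M} ?F = integral {-1..M} ?F"
        unfolding M_def
        apply (rule Henstock_Kurzweil_Integration.integral_combine)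
        using s r norm_ge_zero[of x] apply (simp_all add: integrable_continuous_interval cF)
        by (smt (verit) norm_ge_zero)
      thus ?thesis by simp
    qed
    finally show ?thesis .
  qed
  have "((\<lambda>s. integral {-1..s} ?F) has_vector_derivative ?F 0) (at 0 within {-1..M})"
    by (rule integral_has_vector_derivative[OF cF]) (use r in \<open>simp add: M_def; smt (verit) norm_ge_zero\<close>)
  then have "((\<lambda>s. integral {-1..s} ?F) has_vector_derivative ?F 0) (at 0 within {-1<..<M})"
    by (rule has_vector_derivative_within_subset) auto
  then have "((\<lambda>s. integral {-1..s} ?F) has_real_derivative ?F 0) (at 0)"
    using r by (subst (asm) at_within_open) (auto simp: M_def has_real_derivative_iff_has_vector_derivative intro: add_nonneg_pos add_pos_pos)
  then have "((\<lambda>s. integral {-1..M} ?F - integral {-1..s} ?F) has_real_derivative - ?F 0) (at 0)"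
    by (auto intro!: derivative_eq_intros)
  then have "((\<lambda>s. integral {-1..M} ?F - integral {-1..s} ?F) has_real_derivative - \<phi> x) (at 0)"
    by simp
  then show ?thesis
    by (rule has_field_derivative_transform_within_open[where S="{-1<..<1}"]) (use eq in auto)
qed

lemma dir_deriv:
  fixes y w :: "real^2" and \<phi> :: "real^2 \<Rightarrow> real"
  assumes "(\<phi> has_derivative D) (at (y + h *\<^sub>R w))"
  shows "((\<lambda>h. \<phi> (y + h *\<^sub>R w)) has_real_derivative D w) (at h)"
proof -
  have g: "((\<lambda>h. y + h *\<^sub>R w) has_derivative (\<lambda>k. k *\<^sub>R w)) (at h)"
    by (auto intro!: derivative_eq_intros)
  have "((\<lambda>h. \<phi> (y + h *\<^sub>R w)) has_derivative (\<lambda>k. D (k *\<^sub>R w))) (at h)"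
    using has_derivative_compose[OF g assms] by (simp add: o_def)
  moreover have "(\<lambda>k. D (k *\<^sub>R w)) = (*) (D w)"
  proof
    fix k
    interpret bounded_linear D using assms by (rule has_derivative_bounded_linear)
    show "D (k *\<^sub>R w) = D w * k" by (simp add: scale)
  qed
  ultimately show ?thesis by (simp add: has_field_derivative_def)
qed

lemma beam_param_deriv:
  fixes u v x :: "real^2" and \<phi> :: "real^2 \<Rightarrow> real"
  assumes cont: "continuous_on UNIV \<phi>" and d: "\<And>y. (\<phi> has_derivative D y) (at y)"
    and cpsi: "continuous_on UNIV (\<lambda>y. D y v)"
    and u: "norm u = 1" and r: "r > 0"
    and z: "\<And>y. norm y \<ge> r \<Longrightarrow> \<phi> y = 0"
    and zpsi: "\<And>y. norm y \<ge> r \<Longrightarrow> D y v = 0"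
  shows "((\<lambda>h. beam u \<phi> (x + h *\<^sub>R v)) has_real_derivative beam u (\<lambda>y. D y v) x) (at 0)"
proof -
  define R where "R = norm x + norm v + r"
  have R0: "R \<ge> 0" unfolding R_def using r by (simp add: add_nonneg_pos less_imp_le)
  have eq: "beam u \<phi> (x + h *\<^sub>R v) = integral {0..R} (\<lambda>t. \<phi> (x + h *\<^sub>R v + t *\<^sub>R u))"
    if h: "h \<in> {-1<..<1}" for h
  proof (rule beam_trunc[OF cont R0])
    fix t assume t: "R \<le> t"
    have "norm (x + h *\<^sub>R v) \<le> norm x + norm (h *\<^sub>R v)" by (rule norm_triangle_ineq)
    also have "norm (h *\<^sub>R v) \<le> norm v" using h by (simp add: mult_left_le_one_le abs_le_iff)
    finally have "norm (x + h *\<^sub>R v) \<le> norm x + norm v" by simp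
    moreover have "norm (x + h *\<^sub>R v + t *\<^sub>R u) \<ge> \<bar>t\<bar> - norm (x + h *\<^sub>R v)" by (rule norm_ray_ge[OF u])
    ultimately have "norm (x + h *\<^sub>R v + t *\<^sub>R u) \<ge> r" using t unfolding R_def by linarith
    then show "\<phi> (x + h *\<^sub>R v + t *\<^sub>R u) = 0" by (rule z)
  qed
  have eq0: "beam u (\<lambda>y. D y v) x = integral {0..R} (\<lambda>t. D (x + t *\<^sub>R u) v)"
  proof (rule beam_trunc[OF cpsi R0])
    fix t assume t: "R \<le> t"
    have "norm (x + t *\<^sub>R u) \<ge> \<bar>t\<bar> - norm x" by (rule norm_ray_ge[OF u])
    then have "norm (x + t *\<^sub>R u) \<ge> r" using t norm_ge_zero[of v] unfolding R_def by linarith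
    then show "D (x + t *\<^sub>R u) v = 0" by (rule zpsi)
  qed
  have L: "((\<lambda>h. integral (cbox 0 R) (\<lambda>t. \<phi> (x + h *\<^sub>R v + t *\<^sub>R u))) has_field_derivative
      integral (cbox 0 R) (\<lambda>t. D (x + 0 *\<^sub>R v + t *\<^sub>R u) v)) (at 0 within UNIV)"
  proof (rule leibniz_rule_field_derivative[where fx = "\<lambda>h t. D (x + h *\<^sub>R v + t *\<^sub>R u) v"])
    fix h :: real and t :: real
    have "((\<lambda>h. \<phi> ((x + t *\<^sub>R u) + h *\<^sub>R v)) has_real_derivative D ((x + t *\<^sub>R u) + h *\<^sub>R v) v) (at h)"
      by (rule dir_deriv[OF d])
    then show "((\<lambda>h. \<phi> (x + h *\<^sub>R v + t *\<^sub>R u)) has_field_derivative D (x + h *\<^sub>R v + t *\<^sub>R u) v) (at h within UNIV)"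
      by (simp add: algebra_simps)
  next
    fix h :: real
    show "(\<lambda>t. \<phi> (x + h *\<^sub>R v + t *\<^sub>R u)) integrable_on cbox 0 R"
      by (intro integrable_continuous continuous_on_compose2[OF cont] continuous_intros) auto
  next
    show "continuous_on (UNIV \<times> cbox 0 R) (\<lambda>(h, t). D (x + h *\<^sub>R v + t *\<^sub>R u) v)"
      unfolding split_beta
      by (intro continuous_on_compose2[OF cpsi] continuous_intros) auto
  qed auto
  then have "((\<lambda>h. integral {0..R} (\<lambda>t. \<phi> (x + h *\<^sub>R v + t *\<^sub>R u))) has_real_derivative
      beam u (\<lambda>y. D y v) x) (at 0)"
    using eq0 by simp
  then show ?thesis
    by (rule has_field_derivative_transform_within_open[where S="{-1<..<1}"]) (use eq in auto)
qed



definition dd :: "(real^2 \<Rightarrow> real) \<Rightarrow> real^2 \<Rightarrow> real^2 \<Rightarrow> real" where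
  "dd g y k = k$1 * partial 1 g y + k$2 * partial 2 g y"

lemma vec2_decomp: "(k::real^2) = k$1 *\<^sub>R axis 1 1 + k$2 *\<^sub>R axis 2 1"
  by (simp add: vec_eq_iff forall_2 axis_def)

lemma inner2: "x \<bullet> (y::real^2) = x$1*y$1 + x$2*y$2" by (simp add: inner_vec_def sum_2)
lemma has_deriv_dd:
  assumes "g differentiable (at y)"
  shows "(g has_derivative dd g y) (at y)"
proof -
  let ?L = "frechet_derivative g (at y)"
  have lin: "linear ?L" using assms by (rule linear_frechet_derivative)
  have "?L k = dd g y k" for k
  proof -
    have "?L k = ?L (k$1 *\<^sub>R axis 1 1 + k$2 *\<^sub>R axis 2 1)" by (rule arg_cong[OF vec2_decomp[of k]])
    also have "\<dots> = k$1 * ?L (axis 1 1) + k$2 * ?L (axis 2 1)"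
      using lin by (simp add: linear_add linear_scale)
    finally show ?thesis by (simp add: dd_def partial_def)
  qed
  then have "?L = dd g y" by (intro ext)
  then show ?thesis using assms frechet_derivative_works[of g "at y"] by simp
qed


lemma vanish:
  assumes "supp g \<subseteq> ball 0 r" "norm y \<ge> r"
  shows "g y = 0" "partial i g y = 0"
proof -
  have ny: "y \<in> - supp g" using assms by (auto simp: subset_iff)
  have z: "g z = 0" if "z \<in> - supp g" for z
  proof (rule ccontr)
    assume "g z \<noteq> 0"
    then have "z \<in> {x. g x \<noteq> 0}" by simp
    then have "z \<in> supp g" unfolding supp_def using closure_subset by (rule subsetD[rotated])
    then show False using that by simp
  qed
  show "g y = 0" using z ny .
  have op: "open (- supp g)" unfolding supp_def by (rule open_Compl) (rule closed_closure)
  have "((\<lambda>_. 0) has_derivative (\<lambda>_. 0)) (at y)" by simp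
  then have "(g has_derivative (\<lambda>_. 0)) (at y)"
    by (rule has_derivative_transform_within_open[OF _ op ny]) (simp add: z)
  then have "frechet_derivative g (at y) = (\<lambda>_. 0)" using frechet_derivative_at by metis
  then show "partial i g y = 0" by (simp add: partial_def)
qed

lemma cont_dd:
  assumes "\<forall>i. continuous_on UNIV (partial i g)"
  shows "continuous_on UNIV (\<lambda>y. dd g y k)"
  unfolding dd_def by (intro continuous_intros assms[rule_format])

lemma beam_ftc:
  fixes w y :: "real^2" and \<phi> :: "real^2 \<Rightarrow> real"
  assumes d: "\<And>z. (\<phi> has_derivative D z) (at z)"
    and cpsi: "continuous_on UNIV (\<lambda>z. D z w)"
    and w: "norm w = 1" and r: "r > 0"
    and z: "\<And>z. norm z \<ge> r \<Longrightarrow> \<phi> z = 0"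
    and zpsi: "\<And>z. norm z \<ge> r \<Longrightarrow> D z w = 0"
  shows "beam w (\<lambda>z. D z w) y = - \<phi> y"
proof -
  define R where "R = norm y + r"
  have R0: "R \<ge> 0" unfolding R_def using r by (simp add: add_nonneg_pos less_imp_le)
  have far: "norm (y + t *\<^sub>R w) \<ge> r" if "t \<ge> R" for t
  proof -
    have "norm (y + t *\<^sub>R w) \<ge> \<bar>t\<bar> - norm y" by (rule norm_ray_ge[OF w])
    then show ?thesis using that unfolding R_def by linarith
  qed
  have eq: "beam w (\<lambda>z. D z w) y = integral {0..R} (\<lambda>t. D (y + t *\<^sub>R w) w)"
    by (rule beam_trunc[OF cpsi R0]) (rule zpsi[OF far])
  have "((\<lambda>t. D (y + t *\<^sub>R w) w) has_integral (\<phi> (y + R *\<^sub>R w) - \<phi> (y + 0 *\<^sub>R w))) {0..R}"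
  proof (rule fundamental_theorem_of_calculus[OF R0])
    fix t assume "t \<in> {0..R}"
    have "((\<lambda>t. \<phi> (y + t *\<^sub>R w)) has_real_derivative D (y + t *\<^sub>R w) w) (at t)"
      by (rule dir_deriv[OF d])
    then show "((\<lambda>t. \<phi> (y + t *\<^sub>R w)) has_vector_derivative D (y + t *\<^sub>R w) w) (at t within {0..R})"
      by (simp add: has_real_derivative_iff_has_vector_derivative has_vector_derivative_at_within)
  qed
  moreover have "\<phi> (y + R *\<^sub>R w) = 0" by (rule z[OF far]) simp
  ultimately show ?thesis using eq by (simp add: integral_unique)
qed

lemma comb_deriv:
  fixes f :: "real^2 \<Rightarrow> real^2"
  assumes "(\<lambda>y. f y $ 1) differentiable (at y)" "(\<lambda>y. f y $ 2) differentiable (at y)"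
  shows "((\<lambda>y. f y \<bullet> p) has_derivative
     (\<lambda>k. dd (\<lambda>y. f y $ 1) y k * p$1 + dd (\<lambda>y. f y $ 2) y k * p$2)) (at y)"
proof -
  have e: "(\<lambda>y. f y \<bullet> p) = (\<lambda>y. f y $ 1 * p$1 + f y $ 2 * p$2)" by (simp add: inner2)
  show ?thesis unfolding e
    by (intro has_derivative_add has_derivative_mult_left has_deriv_dd assms)
qed

lemma norm_perp: "norm (perp u) = norm u"
  unfolding norm_eq_sqrt_inner by (simp add: inner2 perp_def algebra_simps)

lemma beam_zero:
  assumes "continuous_on UNIV \<phi>" "\<And>t. t \<ge> 0 \<Longrightarrow> \<phi> (y + t *\<^sub>R w) = 0"
  shows "beam w \<phi> y = 0"
  using beam_trunc[OF assms(1) order_refl assms(2)] by simp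

lemma det_nonzero:
  fixes u v :: "real^2"
  assumes "norm v = 1" "u \<noteq> v" "independent {u, v}"
  shows "u$1 * v$2 - u$2 * v$1 \<noteq> 0"
proof
  assume d: "u$1 * v$2 - u$2 * v$1 = 0"
  have nsp: "u \<notin> span {v}" using assms(2,3) by (simp add: independent_insert)
  have "v \<noteq> 0" using assms(1) by auto
  then have "v$1 \<noteq> 0 \<or> v$2 \<noteq> 0" by (auto simp: vec_eq_iff forall_2)
  then obtain c where "u = c *\<^sub>R v"
  proof
    assume h: "v$1 \<noteq> 0"
    have "u = (u$1/v$1) *\<^sub>R v" using h d by (simp add: vec_eq_iff forall_2 field_simps)
    then show ?thesis using that by blast
  next
    assume h: "v$2 \<noteq> 0"
    have "u = (u$2/v$2) *\<^sub>R v" using h d by (simp add: vec_eq_iff forall_2 field_simps)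
    then show ?thesis using that by blast
  qed
  then have "u \<in> span {v}" by (simp add: span_scale span_base)
  then show False using nsp by simp
qed



theorem theorem2:
  fixes u v :: "real^2" and r1 :: real and f :: "real^2 \<Rightarrow> real^2"
  assumes "norm u = 1" and "norm v = 1"
    and "u \<noteq> v" and "independent {u, v}"
    and "r1 > 0"
    and "C2c (ball 0 r1) (\<lambda>x. f x $ 1)" and "C2c (ball 0 r1) (\<lambda>x. f x $ 2)"
  shows "(\<forall>x. TV u v f x = 0) \<longleftrightarrow> (\<forall>x. divergence f x = 0)"
proof -
  note un = assms(1) and vn = assms(2) and r1 = assms(5)
  define f1 where "f1 = (\<lambda>x. f x $ 1)"
  define f2 where "f2 = (\<lambda>x. f x $ 2)"
  have d1: "\<And>y. f1 differentiable (at y)" and c1: "\<forall>i. continuous_on UNIV (partial i f1)"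
    and s1: "supp f1 \<subseteq> ball 0 r1"
    using assms(6) unfolding f1_def C2c_def C2_plane_def C1_plane_def by auto
  have d2: "\<And>y. f2 differentiable (at y)" and c2: "\<forall>i. continuous_on UNIV (partial i f2)"
    and s2: "supp f2 \<subseteq> ball 0 r1"
    using assms(7) unfolding f2_def C2c_def C2_plane_def C1_plane_def by auto
  define p where "p = perp u"
  define q where "q = perp v"
  define a where "a = (\<lambda>y. f y \<bullet> perp u)"
  define b where "b = (\<lambda>y. f y \<bullet> perp v)"
  define Da where "Da = (\<lambda>y k. dd f1 y k * p$1 + dd f2 y k * p$2)"
  define Db where "Db = (\<lambda>y k. dd f1 y k * q$1 + dd f2 y k * q$2)"
  have da: "\<And>y. (a has_derivative Da y) (at y)"
    unfolding a_def Da_def p_def f1_def f2_def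
    by (rule comb_deriv) (use d1 d2 in \<open>simp_all add: f1_def f2_def\<close>)
  have db: "\<And>y. (b has_derivative Db y) (at y)"
    unfolding b_def Db_def q_def f1_def f2_def
    by (rule comb_deriv) (use d1 d2 in \<open>simp_all add: f1_def f2_def\<close>)
  have ca: "continuous_on UNIV a"
    using da by (meson continuous_at_imp_continuous_on has_derivative_continuous)
  have cb: "continuous_on UNIV b"
    using db by (meson continuous_at_imp_continuous_on has_derivative_continuous)
  have cDa: "continuous_on UNIV (\<lambda>y. Da y k)" for k
    unfolding Da_def by (intro continuous_intros cont_dd c1 c2)
  have cDb: "continuous_on UNIV (\<lambda>y. Db y k)" for k
    unfolding Db_def by (intro continuous_intros cont_dd c1 c2)
  have za: "a y = 0" and zb: "b y = 0" if "norm y \<ge> r1" for y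
    unfolding a_def b_def inner2 using vanish(1)[OF s1 that] vanish(1)[OF s2 that]
    by (simp_all add: f1_def f2_def)
  have zDa: "Da y k = 0" and zDb: "Db y k = 0" if "norm y \<ge> r1" for y k
    unfolding Da_def Db_def dd_def
    using vanish(2)[OF s1 that] vanish(2)[OF s2 that] by simp_all
  define \<delta> where "\<delta> = u$1 * v$2 - u$2 * v$1"
  have \<delta>: "\<delta> \<noteq> 0" unfolding \<delta>_def by (rule det_nonzero[OF vn assms(3,4)])
  have key: "Da y v - Db y u = \<delta> * divergence f y" for y
    unfolding Da_def Db_def dd_def \<delta>_def divergence_def p_def q_def f1_def f2_def
    by (simp add: perp_def algebra_simps)
  have TVe: "TV u v f x = - beam u a x + beam v b x" for x
    unfolding TV_def a_def b_def ..
  show ?thesis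
  proof
    assume T: "\<forall>x. TV u v f x = 0"
    have eqb: "beam u a y = beam v b y" for y using T TVe[of y] by simp
    have step: "beam u (\<lambda>z. Da z v) y = - b y" for y
    proof -
      have B1: "((\<lambda>h. beam u a (y + h *\<^sub>R v)) has_real_derivative beam u (\<lambda>z. Da z v) y) (at 0)"
        by (rule beam_param_deriv[OF ca da cDa un r1 za zDa])
      have B2: "((\<lambda>h. beam v b (y + h *\<^sub>R v)) has_real_derivative - b y) (at 0)"
        by (rule beam_dir_deriv[OF cb vn r1 zb])
      have "(\<lambda>h. beam u a (y + h *\<^sub>R v)) = (\<lambda>h. beam v b (y + h *\<^sub>R v))"
        using eqb by simp
      then have B1': "((\<lambda>h. beam v b (y + h *\<^sub>R v)) has_real_derivative beam u (\<lambda>z. Da z v) y) (at 0)"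
        using B1 by simp
      show ?thesis by (rule DERIV_unique[OF B1' B2])
    qed
    show "\<forall>x. divergence f x = 0"
    proof
      fix x
      have A1: "((\<lambda>s. beam u (\<lambda>z. Da z v) (x + s *\<^sub>R u)) has_real_derivative - Da x v) (at 0)"
        by (rule beam_dir_deriv[OF cDa un r1 zDa])
      have "((\<lambda>s. b (x + s *\<^sub>R u)) has_real_derivative Db (x + 0 *\<^sub>R u) u) (at 0)"
        by (rule dir_deriv[OF db])
      then have A2: "((\<lambda>s. - b (x + s *\<^sub>R u)) has_real_derivative - Db x u) (at 0)"
        by (auto intro!: derivative_eq_intros)
      have "(\<lambda>s. beam u (\<lambda>z. Da z v) (x + s *\<^sub>R u)) = (\<lambda>s. - b (x + s *\<^sub>R u))"
        using step by simp
      then have A1': "((\<lambda>s. - b (x + s *\<^sub>R u)) has_real_derivative - Da x v) (at 0)"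
        using A1 by simp
      have "- Da x v = - Db x u" by (rule DERIV_unique[OF A1' A2])
      then have "\<delta> * divergence f x = 0" using key[of x] by simp
      then show "divergence f x = 0" using \<delta> by simp
    qed
  next
    assume Dv: "\<forall>x. divergence f x = 0"
    have DaDb: "(\<lambda>z. Da z v) = (\<lambda>z. Db z u)" using key Dv by (auto intro!: ext)
    have ftc: "beam u (\<lambda>z. Db z u) y = - b y" for y
      by (rule beam_ftc[OF db cDb un r1 zb zDb])
    define G where "G = (\<lambda>y. beam u a y - beam v b y)"
    have dG: "((\<lambda>h. G (y + h *\<^sub>R v)) has_real_derivative 0) (at 0)" for y
    proof -
      have B1: "((\<lambda>h. beam u a (y + h *\<^sub>R v)) has_real_derivative beam u (\<lambda>z. Da z v) y) (at 0)"
        by (rule beam_param_deriv[OF ca da cDa un r1 za zDa])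
      have B2: "((\<lambda>h. beam v b (y + h *\<^sub>R v)) has_real_derivative - b y) (at 0)"
        by (rule beam_dir_deriv[OF cb vn r1 zb])
      have "((\<lambda>h. G (y + h *\<^sub>R v)) has_real_derivative beam u (\<lambda>z. Da z v) y - - b y) (at 0)"
        unfolding G_def by (rule DERIV_diff[OF B1 B2])
      then show ?thesis using ftc DaDb by simp
    qed
    show "\<forall>x. TV u v f x = 0"
    proof
      fix x
      define H where "H = (\<lambda>h. G (x + h *\<^sub>R v))"
      have dH: "\<forall>h. (H has_real_derivative 0) (at h)"
      proof
        fix h0
        have "((\<lambda>h. G ((x + h0 *\<^sub>R v) + h *\<^sub>R v)) has_real_derivative 0) (at 0)" by (rule dG)
        moreover have "(\<lambda>h. G ((x + h0 *\<^sub>R v) + h *\<^sub>R v)) = (\<lambda>h. H (h + h0))"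
          unfolding H_def by (simp add: scaleR_add_left algebra_simps)
        ultimately have "((\<lambda>h. H (h + h0)) has_real_derivative 0) (at 0)" by simp
        then show "(H has_real_derivative 0) (at h0)" using DERIV_shift[of H 0 0 h0] by simp
      qed
      define S where "S = (norm x + r1) / \<bar>\<delta>\<bar> + norm x + r1"
      have S1: "S \<ge> norm x + r1" unfolding S_def using r1 by simp
      have S2: "S * \<bar>\<delta>\<bar> \<ge> norm x + r1"
      proof -
        have "S * \<bar>\<delta>\<bar> = (norm x + r1) + (norm x + r1) * \<bar>\<delta>\<bar>"
          unfolding S_def using \<delta> by (simp add: field_simps)
        moreover have "(norm x + r1) * \<bar>\<delta>\<bar> \<ge> 0" using r1 by simp
        ultimately show ?thesis by linarith
      qed
      have np: "norm p = 1" unfolding p_def using un norm_perp by simp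
      have up: "u \<bullet> p = 0" unfolding p_def by (simp add: inner2 perp_def)
      have vp: "v \<bullet> p = \<delta>" unfolding p_def \<delta>_def by (simp add: inner2 perp_def algebra_simps)
      have g1: "beam u a (x + S *\<^sub>R v) = 0"
      proof (rule beam_zero[OF ca])
        fix t :: real assume "t \<ge> 0"
        let ?z = "x + S *\<^sub>R v + t *\<^sub>R u"
        have "?z \<bullet> p = x \<bullet> p + S * \<delta>" using up vp by (simp add: inner_add_left)
        moreover have "\<bar>?z \<bullet> p\<bar> \<le> norm ?z" using Cauchy_Schwarz_ineq2[of ?z p] np by simp
        moreover have "\<bar>x \<bullet> p\<bar> \<le> norm x" using Cauchy_Schwarz_ineq2[of x p] np by simp
        moreover have "S \<ge> 0" using S1 r1 norm_ge_zero[of x] by linarith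
        then have "\<bar>S * \<delta>\<bar> = S * \<bar>\<delta>\<bar>" by (simp add: abs_mult)
        ultimately have "norm ?z \<ge> r1" using S2 by linarith
        then show "a ?z = 0" by (rule za)
      qed
      have g2: "beam v b (x + S *\<^sub>R v) = 0"
      proof (rule beam_zero[OF cb])
        fix t :: real assume t: "t \<ge> 0"
        have "norm (x + (S + t) *\<^sub>R v) \<ge> \<bar>S + t\<bar> - norm x" by (rule norm_ray_ge[OF vn])
        then have "norm (x + (S + t) *\<^sub>R v) \<ge> r1" using S1 t by linarith
        then show "b (x + S *\<^sub>R v + t *\<^sub>R v) = 0"
          using zb by (simp add: scaleR_add_left add.assoc)
      qed
      have "H 0 = H S" by (rule DERIV_isconst_all[OF dH])
      then have "G x = 0" using g1 g2 unfolding H_def G_def by simp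
      then show "TV u v f x = 0" unfolding TVe G_def by simp
    qed
  qed
qed

end
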